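(* Every CCCP configuration $\Gamma\triangleright W$ is well-timed: there is $k\in\mathbb N$ such that whenever $\Gamma\triangleright W\,(\to_i)^h\,\mathcal C'$ for some $h\ge 0$ and some configuration $\mathcal C'$, then $h\le k$.
   Context: CCCP syntax. Fix a set of channels (ranged over by $c,d$) and a set of values containing data variables $x,y$ and a special error value $\mathtt{err}$; closed values $v,w$ contain no variables, and each closed value $v$ has a transmission time $\delta_v\in\mathbb{N}$ with $\delta_v\ge 1$. Expressions $e$ are built from values; closed expressions evaluate to closed values via $[\![e]\!]$. Station code (processes) is given by $P,Q ::= c!\langle e\rangle.P \mid \lfloor ?c(x).P\rfloor Q \mid \sigma.P \mid \tau.P \mid P+Q \mid [b]P,Q \mid X \mid \mathbf{0} \mid \mathrm{fix}\,X.P$, where $b$ is either $e_1=e_2$ or $\mathrm{exp}(c)$, $[b]P,Q$ is a conditional (then-branch $P$, else-branch $Q$), $\lfloor ?c(x).P\rfloor Q$ is a receiver on $c$ with timeout branch $Q$ ($x$ bound in $P$), $\sigma.P$ is a one-unit delay and $\sigma^n.P$ denotes $n$ nested delays. System terms are $W ::= P \mid \lfloor ?c(x).P\rfloor \mid W_1|W_2 \mid \nu c{:}(n,v).W$, where $\lfloor ?c(x).P\rfloor$ is an active receiver ($x$ bound in $P$) and $\nu c{:}(n,v).W$ restricts $c$ with local channel state $(n,v)$. In $\mathrm{fix}\,X.P$ every occurrence of $X$ in $P$ is guarded, i.e. lies within a broadcast prefix, a receiver continuation, a timeout branch, a $\sigma$-prefix, or a branch of a conditional. Terms are identified up to $\alpha$-conversion.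 A channel environment is a map $\Gamma$ from channels to $\mathbb{N}\times$(closed values); write $\Gamma\vdash_t c:n$ and $\Gamma\vdash_v c:w$ when $\Gamma(c)=(n,w)$; $c$ is idle in $\Gamma$ if $\Gamma\vdash_t c:0$ and exposed otherwise; $\Gamma[c\mapsto(n,v)]$ is $\Gamma$ updated at $c$; $\Gamma\le\Gamma'$ iff for every $c$, $\Gamma\vdash_t c:n$ and $\Gamma'\vdash_t c:m$ imply $n\le m$. A configuration $\Gamma\triangleright W$ is a channel environment together with a closed system term (no free data or process variables). Intensional semantics. Actions $\lambda$ are $c!v$, $c?v$, $\sigma$, $\tau$. The environment update $\lambda(\Gamma)$ is: $\sigma(\Gamma)(c)=(\max(n-1,0),w)$ whenever $\Gamma(c)=(n,w)$; $c!v(\Gamma)$ agrees with $\Gamma$ except at $c$, where it is $(\delta_v,v)$ if $c$ is idle in $\Gamma$ and $(\max(\delta_v,n),\mathtt{err})$ if $\Gamma\vdash_t c:n>0$; $c?v(\Gamma)=c!v(\Gamma)$; $\tau(\Gamma)=\Gamma$. The predicate $\mathrm{rcv}(W,c)$ on terms is: true for $\lfloor ?d(x).P\rfloor Q$ iff $d=c$; $\mathrm{rcv}(P+Q,c)=\mathrm{rcv}(P,c)\vee\mathrm{rcv}(Q,c)$; $\mathrm{rcv}(\mathrm{fix}\,X.P,c)=\mathrm{rcv}(P,c)$; $\mathrm{rcv}(W_1|W_2,c)=\mathrm{rcv}(W_1,c)\vee\mathrm{rcv}(W_2,c)$; $\mathrm{rcv}(\nu d{:}(n,v).W,c)=\mathrm{rcv}(W,c)$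 (with $d\neq c$ by $\alpha$-conversion); false for all other forms (broadcasts, $\tau.P$, $\sigma.P$, conditionals, $X$, $\mathbf 0$, active receivers). Then $\mathrm{rcv}(\Gamma\triangleright W,c)$ holds iff $c$ is idle in $\Gamma$ and $\mathrm{rcv}(W,c)$. Transitions $\Gamma\triangleright W\xrightarrow{\lambda}W'$ are the least relation closed under: (Snd) $[\![e]\!]=v$ implies $\Gamma\triangleright c!\langle e\rangle.P\xrightarrow{c!v}\sigma^{\delta_v}.P$; (Rcv) $c$ idle in $\Gamma$ implies $\Gamma\triangleright\lfloor ?c(x).P\rfloor Q\xrightarrow{c?v}\lfloor ?c(x).P\rfloor$; (RcvIgn) $\neg\mathrm{rcv}(\Gamma\triangleright W,c)$ implies $\Gamma\triangleright W\xrightarrow{c?v}W$; (Sync) $\Gamma\triangleright W_1\xrightarrow{c!v}W_1'$ and $\Gamma\triangleright W_2\xrightarrow{c?v}W_2'$ imply $\Gamma\triangleright W_1|W_2\xrightarrow{c!v}W_1'|W_2'$, and symmetrically; (RcvPar) $\Gamma\triangleright W_i\xrightarrow{c?v}W_i'$ for $i=1,2$ imply $\Gamma\triangleright W_1|W_2\xrightarrow{c?v}W_1'|W_2'$; (TimeNil) $\Gamma\triangleright\mathbf 0\xrightarrow{\sigma}\mathbf 0$; (Sleep) $\Gamma\triangleright\sigma.P\xrightarrow{\sigma}P$; (ActRcv) $\Gamma\vdash_t c:n$, $n>1$ imply $\Gamma\triangleright\lfloor ?c(x).P\rfloor\xrightarrow{\sigma}\lfloor ?c(x).P\rfloor$;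 (EndRcv) $\Gamma\vdash_t c:1$, $\Gamma\vdash_v c:w$ imply $\Gamma\triangleright\lfloor ?c(x).P\rfloor\xrightarrow{\sigma}\{w/x\}P$; (Timeout) $c$ idle in $\Gamma$ implies $\Gamma\triangleright\lfloor ?c(x).P\rfloor Q\xrightarrow{\sigma}Q$; (RcvLate) $c$ exposed in $\Gamma$ implies $\Gamma\triangleright\lfloor ?c(x).P\rfloor Q\xrightarrow{\tau}\lfloor ?c(x).\{\mathtt{err}/x\}P\rfloor$; (Tau) $\Gamma\triangleright\tau.P\xrightarrow{\tau}P$; (Then)/(Else) $\Gamma\triangleright[b]P,Q\xrightarrow{\tau}\sigma.P$ if $[\![b]\!]_\Gamma$ is true and $\xrightarrow{\tau}\sigma.Q$ otherwise, where $[\![e_1=e_2]\!]_\Gamma$ is true iff $[\![e_1]\!]=[\![e_2]\!]$ and $[\![\mathrm{exp}(c)]\!]_\Gamma$ is true iff $c$ is exposed in $\Gamma$; (TimePar) $\Gamma\triangleright W_i\xrightarrow{\sigma}W_i'$ for $i=1,2$ imply $\Gamma\triangleright W_1|W_2\xrightarrow{\sigma}W_1'|W_2'$; (TauPar) $\Gamma\triangleright W_1\xrightarrow{\tau}W_1'$ implies $\Gamma\triangleright W_1|W_2\xrightarrow{\tau}W_1'|W_2$, and symmetrically; (Rec) $\Gamma\triangleright\{\mathrm{fix}\,X.P/X\}P\xrightarrow{\lambda}W$ implies $\Gamma\triangleright\mathrm{fix}\,X.P\xrightarrow{\lambda}W$; (Sum) for $\lambda\in\{\tau,c!v\}$, $\Gamma\triangleright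 P\xrightarrow{\lambda}W$ implies $\Gamma\triangleright P+Q\xrightarrow{\lambda}W$, and symmetrically; (SumTime) $\Gamma\triangleright P\xrightarrow{\sigma}P'$, $\Gamma\triangleright Q\xrightarrow{\sigma}Q'$ imply $\Gamma\triangleright P+Q\xrightarrow{\sigma}P'+Q'$; (SumRcv) $\Gamma\triangleright P\xrightarrow{c?v}W$ and $\mathrm{rcv}(\Gamma\triangleright P,c)$ imply $\Gamma\triangleright P+Q\xrightarrow{c?v}W$, and symmetrically; (ResI) $\Gamma[c\mapsto(n,v)]\triangleright W\xrightarrow{c!w}W'$ implies $\Gamma\triangleright\nu c{:}(n,v).W\xrightarrow{\tau}\nu c{:}(c!w(\Gamma[c\mapsto(n,v)]))(c).W'$; (ResV) $\Gamma[c\mapsto(n,v)]\triangleright W\xrightarrow{\lambda}W'$ with $c$ not occurring in $\lambda$ implies $\Gamma\triangleright\nu c{:}(n,v).W\xrightarrow{\lambda}\nu c{:}(\lambda(\Gamma[c\mapsto(n,v)]))(c).W'$. Reductions. $\Gamma\triangleright W\to\Gamma'\triangleright W'$ iff $\Gamma\triangleright W\xrightarrow{\lambda}W'$ for some $\lambda\in\{c!v,\sigma,\tau\}$ and $\Gamma'=\lambda(\Gamma)$; it is instantaneous ($\to_i$) if $\lambda\neq\sigma$ and timed ($\to_\sigma$) if $\lambda=\sigma$. *)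

theory Defs
  imports Main
begin

datatype ('d, 'x) val = VVar 'x | VErr | VConst 'd

fun closed_val :: "('d, 'x) val \<Rightarrow> bool" where
  "closed_val (VVar _) = False"
| "closed_val _ = True"

datatype ('d, 'x, 'f) exp = EV "('d, 'x) val" | EOp 'f "('d, 'x, 'f) exp list"

datatype ('d, 'x, 'f, 'ch) bexp = BEq "('d, 'x, 'f) exp" "('d, 'x, 'f) exp" | BExposed 'ch

datatype ('d, 'x, 'f, 'ch, 'X) proc =
    PSnd 'ch "('d, 'x, 'f) exp" "('d, 'x, 'f, 'ch, 'X) proc"
  | PRcv 'ch 'x "('d, 'x, 'f, 'ch, 'X) proc" "('d, 'x, 'f, 'ch, 'X) proc"
  | PSig "('d, 'x, 'f, 'ch, 'X) proc"
  | PTau "('d, 'x, 'f, 'ch, 'X) proc"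
  | PSum "('d, 'x, 'f, 'ch, 'X) proc" "('d, 'x, 'f, 'ch, 'X) proc"
  | PCond "('d, 'x, 'f, 'ch) bexp" "('d, 'x, 'f, 'ch, 'X) proc" "('d, 'x, 'f, 'ch, 'X) proc"
  | PVar 'X
  | PNil
  | PFix 'X "('d, 'x, 'f, 'ch, 'X) proc"

datatype ('d, 'x, 'f, 'ch, 'X) sys =
    Proc "('d, 'x, 'f, 'ch, 'X) proc"
  | ARcv 'ch 'x "('d, 'x, 'f, 'ch, 'X) proc"
  | Par "('d, 'x, 'f, 'ch, 'X) sys" "('d, 'x, 'f, 'ch, 'X) sys"
  | Res 'ch nat "('d, 'x) val" "('d, 'x, 'f, 'ch, 'X) sys"

fun sigmas :: "nat \<Rightarrow> ('d, 'x, 'f, 'ch, 'X) proc \<Rightarrow> ('d, 'x, 'f, 'ch, 'X) proc" where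
  "sigmas 0 P = P"
| "sigmas (Suc n) P = PSig (sigmas n P)"

fun fv_val :: "('d, 'x) val \<Rightarrow> 'x set" where
  "fv_val (VVar x) = {x}"
| "fv_val _ = {}"

fun fv_exp :: "('d, 'x, 'f) exp \<Rightarrow> 'x set" where
  "fv_exp (EV v) = fv_val v"
| "fv_exp (EOp f es) = (\<Union>e\<in>set es. fv_exp e)"

fun fv_bexp :: "('d, 'x, 'f, 'ch) bexp \<Rightarrow> 'x set" where
  "fv_bexp (BEq e1 e2) = fv_exp e1 \<union> fv_exp e2"
| "fv_bexp (BExposed c) = {}"

fun fv_proc :: "('d, 'x, 'f, 'ch, 'X) proc \<Rightarrow> 'x set" where
  "fv_proc (PSnd c e P) = fv_exp e \<union> fv_proc P"
| "fv_proc (PRcv c x P Q) = (fv_proc P - {x}) \<union> fv_proc Q"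
| "fv_proc (PSig P) = fv_proc P"
| "fv_proc (PTau P) = fv_proc P"
| "fv_proc (PSum P Q) = fv_proc P \<union> fv_proc Q"
| "fv_proc (PCond b P Q) = fv_bexp b \<union> fv_proc P \<union> fv_proc Q"
| "fv_proc (PVar X) = {}"
| "fv_proc PNil = {}"
| "fv_proc (PFix X P) = fv_proc P"

fun fpv_proc :: "('d, 'x, 'f, 'ch, 'X) proc \<Rightarrow> 'X set" where
  "fpv_proc (PSnd c e P) = fpv_proc P"
| "fpv_proc (PRcv c x P Q) = fpv_proc P \<union> fpv_proc Q"
| "fpv_proc (PSig P) = fpv_proc P"
| "fpv_proc (PTau P) = fpv_proc P"
| "fpv_proc (PSum P Q) = fpv_proc P \<union> fpv_proc Q"
| "fpv_proc (PCond b P Q) = fpv_proc P \<union> fpv_proc Q"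
| "fpv_proc (PVar X) = {X}"
| "fpv_proc PNil = {}"
| "fpv_proc (PFix X P) = fpv_proc P - {X}"

fun fv_sys :: "('d, 'x, 'f, 'ch, 'X) sys \<Rightarrow> 'x set" where
  "fv_sys (Proc P) = fv_proc P"
| "fv_sys (ARcv c x P) = fv_proc P - {x}"
| "fv_sys (Par W1 W2) = fv_sys W1 \<union> fv_sys W2"
| "fv_sys (Res c n v W) = fv_val v \<union> fv_sys W"

fun fpv_sys :: "('d, 'x, 'f, 'ch, 'X) sys \<Rightarrow> 'X set" where
  "fpv_sys (Proc P) = fpv_proc P"
| "fpv_sys (ARcv c x P) = fpv_proc P"
| "fpv_sys (Par W1 W2) = fpv_sys W1 \<union> fpv_sys W2"
| "fpv_sys (Res c n v W) = fpv_sys W"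

text \<open>Substitution of a closed value for a data variable (no capture can occur
  since the substituted value is closed).\<close>
fun subst_val :: "('d, 'x) val \<Rightarrow> 'x \<Rightarrow> ('d, 'x) val \<Rightarrow> ('d, 'x) val" where
  "subst_val w x (VVar y) = (if x = y then w else VVar y)"
| "subst_val w x v = v"

fun subst_exp :: "('d, 'x) val \<Rightarrow> 'x \<Rightarrow> ('d, 'x, 'f) exp \<Rightarrow> ('d, 'x, 'f) exp" where
  "subst_exp w x (EV v) = EV (subst_val w x v)"
| "subst_exp w x (EOp f es) = EOp f (map (subst_exp w x) es)"

fun subst_bexp :: "('d, 'x) val \<Rightarrow> 'x \<Rightarrow> ('d, 'x, 'f, 'ch) bexp \<Rightarrow> ('d, 'x, 'f, 'ch) bexp" where
  "subst_bexp w x (BEq e1 e2) = BEq (subst_exp w x e1) (subst_exp w x e2)"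
| "subst_bexp w x (BExposed c) = BExposed c"

fun subst_proc :: "('d, 'x) val \<Rightarrow> 'x \<Rightarrow> ('d, 'x, 'f, 'ch, 'X) proc \<Rightarrow> ('d, 'x, 'f, 'ch, 'X) proc" where
  "subst_proc w x (PSnd c e P) = PSnd c (subst_exp w x e) (subst_proc w x P)"
| "subst_proc w x (PRcv c y P Q) =
     PRcv c y (if x = y then P else subst_proc w x P) (subst_proc w x Q)"
| "subst_proc w x (PSig P) = PSig (subst_proc w x P)"
| "subst_proc w x (PTau P) = PTau (subst_proc w x P)"
| "subst_proc w x (PSum P Q) = PSum (subst_proc w x P) (subst_proc w x Q)"
| "subst_proc w x (PCond b P Q) = PCond (subst_bexp w x b) (subst_proc w x P) (subst_proc w x Q)"
| "subst_proc w x (PVar X) = PVar X"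
| "subst_proc w x PNil = PNil"
| "subst_proc w x (PFix X P) = PFix X (subst_proc w x P)"

fun psubst :: "('d, 'x, 'f, 'ch, 'X) proc \<Rightarrow> 'X \<Rightarrow> ('d, 'x, 'f, 'ch, 'X) proc \<Rightarrow> ('d, 'x, 'f, 'ch, 'X) proc" where
  "psubst R X (PSnd c e P) = PSnd c e (psubst R X P)"
| "psubst R X (PRcv c y P Q) = PRcv c y (psubst R X P) (psubst R X Q)"
| "psubst R X (PSig P) = PSig (psubst R X P)"
| "psubst R X (PTau P) = PTau (psubst R X P)"
| "psubst R X (PSum P Q) = PSum (psubst R X P) (psubst R X Q)"
| "psubst R X (PCond b P Q) = PCond b (psubst R X P) (psubst R X Q)"
| "psubst R X (PVar Y) = (if X = Y then R else PVar Y)"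
| "psubst R X PNil = PNil"
| "psubst R X (PFix Y P) = (if X = Y then PFix Y P else PFix Y (psubst R X P))"

fun unguarded :: "'X \<Rightarrow> ('d, 'x, 'f, 'ch, 'X) proc \<Rightarrow> bool" where
  "unguarded X (PSnd c e P) = False"
| "unguarded X (PRcv c y P Q) = False"
| "unguarded X (PSig P) = False"
| "unguarded X (PTau P) = unguarded X P"
| "unguarded X (PSum P Q) = (unguarded X P \<or> unguarded X Q)"
| "unguarded X (PCond b P Q) = False"
| "unguarded X (PVar Y) = (X = Y)"
| "unguarded X PNil = False"
| "unguarded X (PFix Y P) = (X \<noteq> Y \<and> unguarded X P)"

fun wf_proc :: "('d, 'x, 'f, 'ch, 'X) proc \<Rightarrow> bool" where
  "wf_proc (PSnd c e P) = wf_proc P"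
| "wf_proc (PRcv c y P Q) = (wf_proc P \<and> wf_proc Q)"
| "wf_proc (PSig P) = wf_proc P"
| "wf_proc (PTau P) = wf_proc P"
| "wf_proc (PSum P Q) = (wf_proc P \<and> wf_proc Q)"
| "wf_proc (PCond b P Q) = (wf_proc P \<and> wf_proc Q)"
| "wf_proc (PVar Y) = True"
| "wf_proc PNil = True"
| "wf_proc (PFix X P) = (\<not> unguarded X P \<and> wf_proc P)"

fun wf_sys :: "('d, 'x, 'f, 'ch, 'X) sys \<Rightarrow> bool" where
  "wf_sys (Proc P) = wf_proc P"
| "wf_sys (ARcv c x P) = wf_proc P"
| "wf_sys (Par W1 W2) = (wf_sys W1 \<and> wf_sys W2)"
| "wf_sys (Res c n v W) = (closed_val v \<and> wf_sys W)"

type_synonym ('ch, 'd, 'x) env = "'ch \<Rightarrow> nat \<times> ('d, 'x) val"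

definition idle :: "('ch, 'd, 'x) env \<Rightarrow> 'ch \<Rightarrow> bool" where
  "idle \<Gamma> c \<longleftrightarrow> fst (\<Gamma> c) = 0"

definition exposed :: "('ch, 'd, 'x) env \<Rightarrow> 'ch \<Rightarrow> bool" where
  "exposed \<Gamma> c \<longleftrightarrow> fst (\<Gamma> c) \<noteq> 0"

datatype ('ch, 'd, 'x) act = AOut 'ch "('d, 'x) val" | AIn 'ch "('d, 'x) val" | ASig | ATau

fun act_chan :: "('ch, 'd, 'x) act \<Rightarrow> 'ch option" where
  "act_chan (AOut c v) = Some c"
| "act_chan (AIn c v) = Some c"
| "act_chan ASig = None"
| "act_chan ATau = None"

definition bcast_upd :: "(('d, 'x) val \<Rightarrow> nat) \<Rightarrow> 'ch \<Rightarrow> ('d, 'x) val \<Rightarrow> ('ch, 'd, 'x) env \<Rightarrow> ('ch, 'd, 'x) env" where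
  "bcast_upd \<delta> c v \<Gamma> = \<Gamma>(c := (if fst (\<Gamma> c) = 0 then (\<delta> v, v)
                                 else (max (\<delta> v) (fst (\<Gamma> c)), VErr)))"

fun env_upd :: "(('d, 'x) val \<Rightarrow> nat) \<Rightarrow> ('ch, 'd, 'x) act \<Rightarrow> ('ch, 'd, 'x) env \<Rightarrow> ('ch, 'd, 'x) env" where
  "env_upd \<delta> ASig \<Gamma> = (\<lambda>c. (fst (\<Gamma> c) - 1, snd (\<Gamma> c)))"
| "env_upd \<delta> (AOut c v) \<Gamma> = bcast_upd \<delta> c v \<Gamma>"
| "env_upd \<delta> (AIn c v) \<Gamma> = bcast_upd \<delta> c v \<Gamma>"
| "env_upd \<delta> ATau \<Gamma> = \<Gamma>"

fun eval :: "('f \<Rightarrow> ('d, 'x) val list \<Rightarrow> ('d, 'x) val) \<Rightarrow> ('d, 'x, 'f) exp \<Rightarrow> ('d, 'x) val" where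
  "eval I (EV v) = v"
| "eval I (EOp f es) = I f (map (eval I) es)"

fun beval :: "('f \<Rightarrow> ('d, 'x) val list \<Rightarrow> ('d, 'x) val) \<Rightarrow> ('ch, 'd, 'x) env \<Rightarrow> ('d, 'x, 'f, 'ch) bexp \<Rightarrow> bool" where
  "beval I \<Gamma> (BEq e1 e2) = (eval I e1 = eval I e2)"
| "beval I \<Gamma> (BExposed c) = exposed \<Gamma> c"

fun rcv :: "('d, 'x, 'f, 'ch, 'X) sys \<Rightarrow> 'ch \<Rightarrow> bool" where
  "rcv (Proc (PRcv d x P Q)) c = (d = c)"
| "rcv (Proc (PSum P Q)) c = (rcv (Proc P) c \<or> rcv (Proc Q) c)"
| "rcv (Proc (PFix X P)) c = rcv (Proc P) c"
| "rcv (Par W1 W2) c = (rcv W1 c \<or> rcv W2 c)"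
| "rcv (Res d n v W) c = (d \<noteq> c \<and> rcv W c)"
| "rcv _ c = False"

definition rcv_cfg :: "('ch, 'd, 'x) env \<Rightarrow> ('d, 'x, 'f, 'ch, 'X) sys \<Rightarrow> 'ch \<Rightarrow> bool" where
  "rcv_cfg \<Gamma> W c \<longleftrightarrow> idle \<Gamma> c \<and> rcv W c"

inductive trans :: "(('d, 'x) val \<Rightarrow> nat) \<Rightarrow> ('f \<Rightarrow> ('d, 'x) val list \<Rightarrow> ('d, 'x) val)
    \<Rightarrow> ('ch, 'd, 'x) env \<Rightarrow> ('d, 'x, 'f, 'ch, 'X) sys \<Rightarrow> ('ch, 'd, 'x) act
    \<Rightarrow> ('d, 'x, 'f, 'ch, 'X) sys \<Rightarrow> bool"
  for \<delta> I where
  Snd: "eval I e = v \<Longrightarrow> trans \<delta> I \<Gamma> (Proc (PSnd c e P)) (AOut c v) (Proc (sigmas (\<delta> v) P))"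
| Rcv: "idle \<Gamma> c \<Longrightarrow> trans \<delta> I \<Gamma> (Proc (PRcv c x P Q)) (AIn c v) (ARcv c x P)"
| RcvIgn: "\<not> rcv_cfg \<Gamma> W c \<Longrightarrow> trans \<delta> I \<Gamma> W (AIn c v) W"
| Sync1: "trans \<delta> I \<Gamma> W1 (AOut c v) W1' \<Longrightarrow> trans \<delta> I \<Gamma> W2 (AIn c v) W2'
          \<Longrightarrow> trans \<delta> I \<Gamma> (Par W1 W2) (AOut c v) (Par W1' W2')"
| Sync2: "trans \<delta> I \<Gamma> W1 (AIn c v) W1' \<Longrightarrow> trans \<delta> I \<Gamma> W2 (AOut c v) W2'
          \<Longrightarrow> trans \<delta> I \<Gamma> (Par W1 W2) (AOut c v) (Par W1' W2')"
| RcvPar: "trans \<delta> I \<Gamma> W1 (AIn c v) W1' \<Longrightarrow> trans \<delta> I \<Gamma> W2 (AIn c v) W2'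
          \<Longrightarrow> trans \<delta> I \<Gamma> (Par W1 W2) (AIn c v) (Par W1' W2')"
| TimeNil: "trans \<delta> I \<Gamma> (Proc PNil) ASig (Proc PNil)"
| Sleep: "trans \<delta> I \<Gamma> (Proc (PSig P)) ASig (Proc P)"
| ActRcv: "fst (\<Gamma> c) > 1 \<Longrightarrow> trans \<delta> I \<Gamma> (ARcv c x P) ASig (ARcv c x P)"
| EndRcv: "\<Gamma> c = (1, w) \<Longrightarrow> trans \<delta> I \<Gamma> (ARcv c x P) ASig (Proc (subst_proc w x P))"
| Timeout: "idle \<Gamma> c \<Longrightarrow> trans \<delta> I \<Gamma> (Proc (PRcv c x P Q)) ASig (Proc Q)"
| RcvLate: "exposed \<Gamma> c \<Longrightarrow> trans \<delta> I \<Gamma> (Proc (PRcv c x P Q)) ATau (ARcv c x (subst_proc VErr x P))"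
| Tau: "trans \<delta> I \<Gamma> (Proc (PTau P)) ATau (Proc P)"
| Then: "beval I \<Gamma> b \<Longrightarrow> trans \<delta> I \<Gamma> (Proc (PCond b P Q)) ATau (Proc (PSig P))"
| Else: "\<not> beval I \<Gamma> b \<Longrightarrow> trans \<delta> I \<Gamma> (Proc (PCond b P Q)) ATau (Proc (PSig Q))"
| TimePar: "trans \<delta> I \<Gamma> W1 ASig W1' \<Longrightarrow> trans \<delta> I \<Gamma> W2 ASig W2'
          \<Longrightarrow> trans \<delta> I \<Gamma> (Par W1 W2) ASig (Par W1' W2')"
| TauPar1: "trans \<delta> I \<Gamma> W1 ATau W1' \<Longrightarrow> trans \<delta> I \<Gamma> (Par W1 W2) ATau (Par W1' W2)"
| TauPar2: "trans \<delta> I \<Gamma> W2 ATau W2' \<Longrightarrow> trans \<delta> I \<Gamma> (Par W1 W2) ATau (Par W1 W2')"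
| Rec: "trans \<delta> I \<Gamma> (Proc (psubst (PFix X P) X P)) a W \<Longrightarrow> trans \<delta> I \<Gamma> (Proc (PFix X P)) a W"
| Sum1: "a = ATau \<or> (\<exists>c v. a = AOut c v) \<Longrightarrow> trans \<delta> I \<Gamma> (Proc P) a W
          \<Longrightarrow> trans \<delta> I \<Gamma> (Proc (PSum P Q)) a W"
| Sum2: "a = ATau \<or> (\<exists>c v. a = AOut c v) \<Longrightarrow> trans \<delta> I \<Gamma> (Proc Q) a W
          \<Longrightarrow> trans \<delta> I \<Gamma> (Proc (PSum P Q)) a W"
| SumTime: "trans \<delta> I \<Gamma> (Proc P) ASig (Proc P') \<Longrightarrow> trans \<delta> I \<Gamma> (Proc Q) ASig (Proc Q')
          \<Longrightarrow> trans \<delta> I \<Gamma> (Proc (PSum P Q)) ASig (Proc (PSum P' Q'))"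
| SumRcv1: "trans \<delta> I \<Gamma> (Proc P) (AIn c v) W \<Longrightarrow> rcv_cfg \<Gamma> (Proc P) c
          \<Longrightarrow> trans \<delta> I \<Gamma> (Proc (PSum P Q)) (AIn c v) W"
| SumRcv2: "trans \<delta> I \<Gamma> (Proc Q) (AIn c v) W \<Longrightarrow> rcv_cfg \<Gamma> (Proc Q) c
          \<Longrightarrow> trans \<delta> I \<Gamma> (Proc (PSum P Q)) (AIn c v) W"
| ResI: "trans \<delta> I (\<Gamma>(c := (n, v))) W (AOut c w) W'
          \<Longrightarrow> (n', v') = env_upd \<delta> (AOut c w) (\<Gamma>(c := (n, v))) c
          \<Longrightarrow> trans \<delta> I \<Gamma> (Res c n v W) ATau (Res c n' v' W')"
| ResV: "trans \<delta> I (\<Gamma>(c := (n, v))) W a W' \<Longrightarrow> act_chan a \<noteq> Some c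
          \<Longrightarrow> (n', v') = env_upd \<delta> a (\<Gamma>(c := (n, v))) c
          \<Longrightarrow> trans \<delta> I \<Gamma> (Res c n v W) a (Res c n' v' W')"

definition config :: "('ch, 'd, 'x) env \<times> ('d, 'x, 'f, 'ch, 'X) sys \<Rightarrow> bool" where
  "config C \<longleftrightarrow> (\<forall>c. closed_val (snd (fst C c))) \<and> fv_sys (snd C) = {} \<and> fpv_sys (snd C) = {}
                  \<and> wf_sys (snd C)"

definition red_i :: "(('d, 'x) val \<Rightarrow> nat) \<Rightarrow> ('f \<Rightarrow> ('d, 'x) val list \<Rightarrow> ('d, 'x) val)
    \<Rightarrow> ('ch, 'd, 'x) env \<times> ('d, 'x, 'f, 'ch, 'X) sys
    \<Rightarrow> ('ch, 'd, 'x) env \<times> ('d, 'x, 'f, 'ch, 'X) sys \<Rightarrow> bool" where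
  "red_i \<delta> I C C' \<longleftrightarrow> config C \<and> config C' \<and>
     (\<exists>a. (a = ATau \<or> (\<exists>c v. a = AOut c v)) \<and>
          trans \<delta> I (fst C) (snd C) a (snd C') \<and> fst C' = env_upd \<delta> a (fst C))"

end

theory Submission
  imports Defs
begin

fun mp :: "('d, 'x, 'f, 'ch, 'X) proc \<Rightarrow> nat" where
  "mp (PSnd c e P) = 1"
| "mp (PRcv c x P Q) = 1"
| "mp (PSig P) = 0"
| "mp (PTau P) = Suc (mp P)"
| "mp (PSum P Q) = max (mp P) (mp Q)"
| "mp (PCond b P Q) = 1"
| "mp (PVar X) = 0"
| "mp PNil = 0"
| "mp (PFix X P) = mp P"

fun ms :: "('d, 'x, 'f, 'ch, 'X) sys \<Rightarrow> nat" where
  "ms (Proc P) = mp P"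
| "ms (ARcv c x P) = 0"
| "ms (Par W1 W2) = ms W1 + ms W2"
| "ms (Res c n v W) = ms W"

definition inv :: "('d, 'x, 'f, 'ch, 'X) sys \<Rightarrow> bool" where
  "inv W \<longleftrightarrow> fv_sys W = {} \<and> fpv_sys W = {} \<and> wf_sys W"

lemma eval_closed:
  assumes "\<And>f vs. (\<forall>v\<in>set vs. closed_val v) \<Longrightarrow> closed_val (I f vs)"
  shows "fv_exp e = {} \<Longrightarrow> closed_val (eval I e)"
proof (induction e)
  case (EV v) then show ?case by (cases v) auto
next
  case (EOp f es) then show ?case using assms by auto
qed

lemma fpv_psubst: "fpv_proc (psubst R X P) \<subseteq> (fpv_proc P - {X}) \<union> fpv_proc R"
  by (induction P) auto

lemma fv_psubst: "fv_proc (psubst R X P) \<subseteq> fv_proc P \<union> fv_proc R"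
  by (induction P) auto

lemma unguarded_fpv: "unguarded Y R \<Longrightarrow> Y \<in> fpv_proc R"
  by (induction R) auto

lemma unguarded_psubst: "fpv_proc R = {} \<Longrightarrow> unguarded Y (psubst R X P) \<Longrightarrow> unguarded Y P"
  by (induction P) (auto dest: unguarded_fpv split: if_splits)

lemma wf_psubst: "wf_proc P \<Longrightarrow> wf_proc R \<Longrightarrow> fpv_proc R = {} \<Longrightarrow> wf_proc (psubst R X P)"
  by (induction P) (auto dest: unguarded_psubst)

lemma mp_psubst: "\<not> unguarded X P \<Longrightarrow> mp (psubst R X P) = mp P"
  by (induction P) auto

lemma mp_sigmas: "mp (sigmas (Suc n) P) = 0"
  by simp

lemma dec:
  assumes "trans \<delta> I \<Gamma> W a W'"
    and dp: "\<And>v. closed_val v \<Longrightarrow> \<delta> v \<ge> 1"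
    and ic: "\<And>f vs. (\<forall>v\<in>set vs. closed_val v) \<Longrightarrow> closed_val (I f vs)"
  shows "inv W \<Longrightarrow> ((a = ATau \<or> (\<exists>c v. a = AOut c v)) \<longrightarrow> ms W' < ms W)
           \<and> ((\<exists>c v. a = AIn c v) \<longrightarrow> ms W' \<le> ms W)"
  using assms(1)
proof (induction rule: trans.induct)
  case (Snd e v \<Gamma> c P)
  then have "closed_val v" using eval_closed[OF ic] by (auto simp: inv_def)
  then have "\<delta> v \<ge> 1" using dp by auto
  then obtain n where "\<delta> v = Suc n" by (cases "\<delta> v") auto
  then show ?case by simp
next
  case (Rec \<Gamma> X P a W)
  have "inv (Proc (psubst (PFix X P) X P))"
    using Rec.prems fv_psubst[of "PFix X P" X P] fpv_psubst[of "PFix X P" X P]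
      wf_psubst[of P "PFix X P" X]
    by (auto simp: inv_def)
  moreover have "mp (psubst (PFix X P) X P) = mp P"
    using Rec.prems by (auto simp: inv_def mp_psubst)
  ultimately show ?case using Rec.IH by simp
qed (auto simp: inv_def)

theorem mainTheorem12:
  fixes \<delta> :: "('d, 'x) val \<Rightarrow> nat"
    and I :: "'f \<Rightarrow> ('d, 'x) val list \<Rightarrow> ('d, 'x) val"
    and \<Gamma> :: "('ch, 'd, 'x) env"
    and W :: "('d, 'x, 'f, 'ch, 'X) sys"
  assumes delta_pos: "\<And>v. closed_val v \<Longrightarrow> \<delta> v \<ge> 1"
    and I_closed: "\<And>f vs. (\<forall>v\<in>set vs. closed_val v) \<Longrightarrow> closed_val (I f vs)"
    and cfg: "config (\<Gamma>, W)"
  shows "\<exists>k::nat. \<forall>h C'. ((red_i \<delta> I) ^^ h) (\<Gamma>, W) C' \<longrightarrow> h \<le> k"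
proof -
  have step: "ms (snd C') < ms (snd C)" if "red_i \<delta> I C C'" for C C'
  proof -
    from that obtain a where "config C" "a = ATau \<or> (\<exists>c v. a = AOut c v)"
      "trans \<delta> I (fst C) (snd C) a (snd C')" by (auto simp: red_i_def)
    then show ?thesis using dec[of \<delta> I "fst C" "snd C" a "snd C'"] delta_pos I_closed
      by (auto simp: inv_def config_def)
  qed
  have "\<forall>C'. ((red_i \<delta> I) ^^ h) (\<Gamma>, W) C' \<longrightarrow> h + ms (snd C') \<le> ms W" for h
  proof (induction h)
    case 0 then show ?case by simp
  next
    case (Suc h)
    show ?case
    proof (intro allI impI)
      fix C' assume "((red_i \<delta> I) ^^ Suc h) (\<Gamma>, W) C'"
      then obtain C'' where "((red_i \<delta> I) ^^ h) (\<Gamma>, W) C''" "red_i \<delta> I C'' C'"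
        by (auto elim: relpowp_Suc_E)
      then show "Suc h + ms (snd C') \<le> ms W" using Suc.IH step by fastforce
    qed
  qed
  then show ?thesis by (intro exI[of _ "ms W"]) fastforce
qed

end
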